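(* Let $a,a^*\in\mathbb K$ be nonzero, and let $A,A^*\in\mathcal U$ satisfy either ($A=ay^-_1$ and $A^*=a^*y^-_0$) or ($A=ay^+_0$ and $A^*=a^*y^+_1$). Let $V$ be a finite-dimensional irreducible $\mathcal U$-module of type $(1,1)$, and assume $V$ is irreducible as an $(A,A^* )$-module, i.e. there is no subspace $W$ of $V$ with $AW\subseteq W$, $A^*W\subseteq W$, $W\ne0$, $W\ne V$. Then $A,A^*$ act on $V$ as a tridiagonal pair. Denoting its diameter by $d$, the sequence $aq^{2i-d}$ ($0\le i\le d$) is a standard ordering of the eigenvalues of $A$ on $V$ and the sequence $a^*q^{d-2i}$ ($0\le i\le d$) is a standard ordering of the eigenvalues of $A^*$ on $V$.
   Context: $\mathbb K$ is an algebraically closed field, $q\in\mathbb K$ nonzero and not a root of unity, $[3]_q=\frac{q^3-q^{-3}}{q-q^{-1}}$. $\mathcal U$ (isomorphic to $U_q(\widehat{sl}_2)$) is the unital associative $\mathbb K$-algebra with generators $y^{\pm}_i,k_i^{\pm1}$ ($i\in\{0,1\}$) and relations: $k_ik_i^{-1}=k_i^{-1}k_i=1$; $k_0k_1$ central; $\frac{qy^+_ik_i-q^{-1}k_iy^+_i}{q-q^{-1}}=1$; $\frac{qk_iy^-_i-q^{-1}y^-_ik_i}{q-q^{-1}}=1$; $\frac{qy^-_iy^+_i-q^{-1}y^+_iy^-_i}{q-q^{-1}}=1$; $\frac{qy^+_iy^-_j-q^{-1}y^-_jy^+_i}{q-q^{-1}}=k_0^{-1}k_1^{-1}$ ($i\ne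 j$); $(y^{\pm}_i)^3y^{\pm}_j-[3]_q(y^{\pm}_i)^2y^{\pm}_jy^{\pm}_i+[3]_qy^{\pm}_iy^{\pm}_j(y^{\pm}_i)^2-y^{\pm}_j(y^{\pm}_i)^3=0$ ($i\ne j$). Type: for a finite-dimensional irreducible $\mathcal U$-module $V$ there are unique nonzero scalars $\varepsilon_0,\varepsilon_1$ and a unique decomposition $U_0,\dots,U_e$ of $V$ (nonzero subspaces, direct sum equal to $V$) with $(k_0-\varepsilon_0q^{2i-e}I)U_i=0$ and $(k_1-\varepsilon_1q^{e-2i}I)U_i=0$ for $0\le i\le e$; the pair $(\varepsilon_0,\varepsilon_1)$ is called the type of $V$. A tridiagonal pair on $V$ is an ordered pair $A,A^*$ of linear maps $V\to V$ such that: (i) each is diagonalizable; (ii) there is an ordering $V_0,\dots,V_d$ of the eigenspaces of $A$ with $A^*V_i\subseteq V_{i-1}+V_i+V_{i+1}$ ($V_{-1}=V_{d+1}=0$); (iii) there is an ordering $V^*_0,\dots,V^*_\delta$ of the eigenspaces of $A^*$ with $AV^*_i\subseteq V^*_{i-1}+V^*_i+V^*_{i+1}$ ($V^*_{-1}=V^*_{\delta+1}=0$); (iv) no subspace $W\ne0,V$ satisfies $AW\subseteq W$, $A^*W\subseteq W$. It is known $d=\delta$, called the diameter. Orderings of eigenspaces satisfying (ii),(iii) are standard; an ordering of eigenvalues is standard if the corresponding eigenspace ordering is. *)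

theory Defs
  imports "HOL-Analysis.Analysis" "HOL-Computational_Algebra.Polynomial"
begin

text \<open>Finite-dimensional modules are modelled on \<open>V = 'k^'n\<close> (\<open>'n\<close> a finite type,
  so \<open>V \<noteq> 0\<close>), each generator acting by an \<open>'n \<times> 'n\<close> matrix.\<close>

definition not_root_of_unity :: "'k::field \<Rightarrow> bool" where
  "not_root_of_unity q \<longleftrightarrow> (\<forall>m::nat. m > 0 \<longrightarrow> q ^ m \<noteq> 1)"

definition qint3 :: "'k::field \<Rightarrow> 'k" where
  "qint3 q = (q ^ 3 - inverse q ^ 3) / (q - inverse q)"

definition qcomm :: "'k::field \<Rightarrow> 'k^'n^'n \<Rightarrow> 'k^'n^'n \<Rightarrow> 'k^'n^'n" where
  "qcomm q X Y = mat (inverse (q - inverse q)) ** (mat q ** (X ** Y) - mat (inverse q) ** (Y ** X))"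

definition serre :: "'k::field \<Rightarrow> 'k^'n^'n \<Rightarrow> 'k^'n^'n \<Rightarrow> 'k^'n^'n" where
  "serre q X Y = X ** X ** X ** Y - mat (qint3 q) ** (X ** X ** Y ** X)
     + mat (qint3 q) ** (X ** Y ** X ** X) - Y ** X ** X ** X"

text \<open>A \<open>\<U>\<close>-module structure on \<open>'k^'n\<close>: \<open>Yp i, Ym i, K i, Ki i\<close> are the actions of
  \<open>y\<^sup>+\<^sub>i, y\<^sup>-\<^sub>i, k\<^sub>i, k\<^sub>i\<^sup>-\<^sup>1\<close> for \<open>i \<in> {0,1}\<close>.\<close>
definition U_module ::
  "'k::field \<Rightarrow> (nat \<Rightarrow> 'k^'n^'n) \<Rightarrow> (nat \<Rightarrow> 'k^'n^'n) \<Rightarrow> (nat \<Rightarrow> 'k^'n^'n) \<Rightarrow> (nat \<Rightarrow> 'k^'n^'n) \<Rightarrow> bool" where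
  "U_module q Yp Ym K Ki \<longleftrightarrow>
     (\<forall>i\<in>{0,1}. K i ** Ki i = mat 1 \<and> Ki i ** K i = mat 1) \<and>
     (\<forall>i\<in>{0,1}. \<forall>X\<in>{Yp i, Ym i, K i, Ki i}. (K 0 ** K 1) ** X = X ** (K 0 ** K 1)) \<and>
     (\<forall>i\<in>{0,1}. qcomm q (Yp i) (K i) = mat 1) \<and>
     (\<forall>i\<in>{0,1}. qcomm q (K i) (Ym i) = mat 1) \<and>
     (\<forall>i\<in>{0,1}. qcomm q (Ym i) (Yp i) = mat 1) \<and>
     (\<forall>i\<in>{0,1}. \<forall>j\<in>{0,1}. i \<noteq> j \<longrightarrow> qcomm q (Yp i) (Ym j) = Ki 0 ** Ki 1) \<and>
     (\<forall>i\<in>{0,1}. \<forall>j\<in>{0,1}. i \<noteq> j \<longrightarrow> serre q (Yp i) (Yp j) = 0 \<and> serre q (Ym i) (Ym j) = 0)"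

definition invariant :: "'k::field^'n^'n \<Rightarrow> ('k^'n) set \<Rightarrow> bool" where
  "invariant M W \<longleftrightarrow> (\<lambda>v. M *v v) ` W \<subseteq> W"

definition U_irreducible ::
  "(nat \<Rightarrow> 'k::field^'n^'n) \<Rightarrow> (nat \<Rightarrow> 'k^'n^'n) \<Rightarrow> (nat \<Rightarrow> 'k^'n^'n) \<Rightarrow> (nat \<Rightarrow> 'k^'n^'n) \<Rightarrow> bool" where
  "U_irreducible Yp Ym K Ki \<longleftrightarrow>
     (\<forall>W. vec.subspace W \<and>
        (\<forall>i\<in>{0,1}. invariant (Yp i) W \<and> invariant (Ym i) W \<and> invariant (K i) W \<and> invariant (Ki i) W)
        \<longrightarrow> W = {0} \<or> W = UNIV)"

definition has_type ::
  "'k::field \<Rightarrow> (nat \<Rightarrow> 'k^'n^'n) \<Rightarrow> 'k \<Rightarrow> 'k \<Rightarrow> bool" where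
  "has_type q K \<epsilon>0 \<epsilon>1 \<longleftrightarrow> \<epsilon>0 \<noteq> 0 \<and> \<epsilon>1 \<noteq> 0 \<and>
     (\<exists>(e::nat) (U :: nat \<Rightarrow> ('k^'n) set).
        (\<forall>i\<le>e. vec.subspace (U i) \<and> U i \<noteq> {0}) \<and>
        (\<forall>v. \<exists>u. (\<forall>i\<le>e. u i \<in> U i) \<and> v = (\<Sum>i\<le>e. u i)) \<and>
        (\<forall>u. (\<forall>i\<le>e. u i \<in> U i) \<and> (\<Sum>i\<le>e. u i) = 0 \<longrightarrow> (\<forall>i\<le>e. u i = 0)) \<and>
        (\<forall>i\<le>e. \<forall>v\<in>U i. K 0 *v v = (\<epsilon>0 * q powi (2 * int i - int e)) *s v \<and>
                         K 1 *v v = (\<epsilon>1 * q powi (int e - 2 * int i)) *s v))"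

definition eigenspace :: "'k::field^'n^'n \<Rightarrow> 'k \<Rightarrow> ('k^'n) set" where
  "eigenspace A \<theta> = {v. A *v v = \<theta> *s v}"

definition is_eigenvalue :: "'k::field^'n^'n \<Rightarrow> 'k \<Rightarrow> bool" where
  "is_eigenvalue A \<theta> \<longleftrightarrow> eigenspace A \<theta> \<noteq> {0}"

definition diagonalizable :: "'k::field^'n^'n \<Rightarrow> bool" where
  "diagonalizable A \<longleftrightarrow> vec.span (\<Union>\<theta>\<in>{\<theta>. is_eigenvalue A \<theta>}. eigenspace A \<theta>) = UNIV"

definition Esp :: "'k::field^'n^'n \<Rightarrow> nat \<Rightarrow> (nat \<Rightarrow> 'k) \<Rightarrow> int \<Rightarrow> ('k^'n) set" where
  "Esp A d \<theta> j = (if 0 \<le> j \<and> j \<le> int d then eigenspace A (\<theta> (nat j)) else {0})"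

definition standard_ordering ::
  "'k::field^'n^'n \<Rightarrow> 'k^'n^'n \<Rightarrow> nat \<Rightarrow> (nat \<Rightarrow> 'k) \<Rightarrow> bool" where
  "standard_ordering A B d \<theta> \<longleftrightarrow>
     inj_on \<theta> {0..d} \<and> \<theta> ` {0..d} = {\<mu>. is_eigenvalue A \<mu>} \<and>
     (\<forall>i\<le>d. \<forall>v\<in>eigenspace A (\<theta> i).
        B *v v \<in> {x + y + z | x y z. x \<in> Esp A d \<theta> (int i - 1) \<and> y \<in> Esp A d \<theta> (int i)
                                 \<and> z \<in> Esp A d \<theta> (int i + 1)})"

definition tridiagonal_pair :: "'k::field^'n^'n \<Rightarrow> 'k^'n^'n \<Rightarrow> bool" where
  "tridiagonal_pair A As \<longleftrightarrow>
     diagonalizable A \<and> diagonalizable As \<and>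
     (\<exists>d \<theta>. standard_ordering A As d \<theta>) \<and>
     (\<exists>\<delta> \<theta>s. standard_ordering As A \<delta> \<theta>s) \<and>
     (\<forall>W. vec.subspace W \<and> invariant A W \<and> invariant As W \<longrightarrow> W = {0} \<or> W = UNIV)"

definition diameter :: "'k::field^'n^'n \<Rightarrow> nat" where
  "diameter A = card {\<theta>. is_eigenvalue A \<theta>} - 1"

end

theory Submission
  imports Defs
begin

lemma mat_mv: "mat c *v x = c *s (x::'k::field^'n)"
  by (vector matrix_vector_mult_def mat_def) (simp add: if_distrib if_distribR cong del: if_weak_cong)

lemma mat_mult_mv: "(mat c ** M) *v x = c *s (M *v (x::'k::field^'n))"
  by (simp add: matrix_vector_mul_assoc[symmetric] mat_mv)

lemma mult_mv: "(M ** N) *v x = M *v (N *v x)"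
  by (simp add: matrix_vector_mul_assoc)

lemma qcomm_mv:
  "qcomm q X Y *v v = inverse (q - inverse q) *s (q *s (X *v (Y *v v)) - inverse q *s (Y *v (X *v v)))"
  unfolding qcomm_def
  by (simp add: mat_mult_mv mult_mv mat_mv matrix_vector_mult_diff_rdistrib vec.diff vector_ssub_ldistrib vector_smult_assoc)

lemma serre_mv:
  "serre q X Y *v v = X *v (X *v (X *v (Y *v v))) - qint3 q *s (X *v (X *v (Y *v (X *v v))))
     + qint3 q *s (X *v (Y *v (X *v (X *v v)))) - Y *v (X *v (X *v (X *v v)))"
  unfolding serre_def
  by (simp add: mat_mult_mv mat_mv mult_mv matrix_vector_mult_diff_rdistrib matrix_vector_mult_add_rdistrib)

lemma qcomm_one:
  fixes q :: "'k::field"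
  assumes "q - inverse q \<noteq> 0" "qcomm q X Y = mat 1"
  shows "q *s (X *v (Y *v v)) - inverse q *s (Y *v (X *v v)) = (q - inverse q) *s v"
proof -
  have "qcomm q X Y *v v = v" using assms(2) by simp
  hence "inverse (q - inverse q) *s (q *s (X *v (Y *v v)) - inverse q *s (Y *v (X *v v))) = v"
    by (simp add: qcomm_mv)
  hence "(q - inverse q) *s (inverse (q - inverse q) *s (q *s (X *v (Y *v v)) - inverse q *s (Y *v (X *v v)))) = (q - inverse q) *s v"
    by simp
  moreover have "(q - inverse q) * inverse (q - inverse q) = 1" using assms(1) by simp
  ultimately show ?thesis by (simp only: vector_smult_assoc vector_smult_lid)
qed

lemma serre_scaled:
  fixes a b :: "'k::field"
  assumes "serre q X Y = 0"
  shows "(mat a ** X) *v ((mat a ** X) *v ((mat a ** X) *v ((mat b ** Y) *v v)))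
     - qint3 q *s ((mat a ** X) *v ((mat a ** X) *v ((mat b ** Y) *v ((mat a ** X) *v v))))
     + qint3 q *s ((mat a ** X) *v ((mat b ** Y) *v ((mat a ** X) *v ((mat a ** X) *v v))))
     - (mat b ** Y) *v ((mat a ** X) *v ((mat a ** X) *v ((mat a ** X) *v v))) = 0"
proof -
  have "serre q X Y *v v = 0" using assms by simp
  hence "(a*a*a*b) *s (serre q X Y *v v) = 0" by simp
  thus ?thesis unfolding serre_mv
    by (simp add: mat_mult_mv vec.scale vector_smult_assoc vector_ssub_ldistrib
        scaleR_right_distrib vector_add_ldistrib mult_ac)
qed


definition dsumU :: "nat \<Rightarrow> (nat \<Rightarrow> ('k::field^'n) set) \<Rightarrow> bool" where
  "dsumU e U \<longleftrightarrow> (\<forall>i\<le>e. vec.subspace (U i)) \<and>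
        (\<forall>v. \<exists>u. (\<forall>i\<le>e. u i \<in> U i) \<and> v = (\<Sum>i\<le>e. u i)) \<and>
        (\<forall>u. (\<forall>i\<le>e. u i \<in> U i) \<and> (\<Sum>i\<le>e. u i) = 0 \<longrightarrow> (\<forall>i\<le>e. u i = 0))"

definition pr :: "nat \<Rightarrow> (nat \<Rightarrow> ('k::field^'n) set) \<Rightarrow> nat \<Rightarrow> 'k^'n \<Rightarrow> 'k^'n" where
  "pr e U i v = (if i \<le> e then (SOME u. (\<forall>i\<le>e. u i \<in> U i) \<and> v = (\<Sum>i\<le>e. u i)) i else 0)"

lemma pr_spec:
  assumes "dsumU e U"
  shows "(\<forall>i\<le>e. pr e U i v \<in> U i) \<and> v = (\<Sum>i\<le>e. pr e U i v)"
proof -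
  let ?P = "\<lambda>u. (\<forall>i\<le>e. u i \<in> U i) \<and> v = (\<Sum>i\<le>e. u i)"
  have "\<exists>u. ?P u" using assms unfolding dsumU_def by blast
  hence "?P (SOME u. ?P u)" by (rule someI_ex)
  moreover have "(\<Sum>i\<le>e. pr e U i v) = (\<Sum>i\<le>e. (SOME u. ?P u) i)"
    by (rule sum.cong) (auto simp: pr_def)
  ultimately show ?thesis by (auto simp: pr_def)
qed

lemma pr_in: "dsumU e U \<Longrightarrow> i \<le> e \<Longrightarrow> pr e U i v \<in> U i"
  using pr_spec by blast

lemma pr_sum: "dsumU e U \<Longrightarrow> (\<Sum>i\<le>e. pr e U i v) = v"
  using pr_spec by metis

lemma pr_out: "e < i \<Longrightarrow> pr e U i v = 0"
  by (simp add: pr_def)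

lemma pr_unique:
  assumes "dsumU e U" "\<forall>i\<le>e. u i \<in> U i" "v = (\<Sum>i\<le>e. u i)" "i \<le> e"
  shows "pr e U i v = u i"
proof -
  have sub: "\<forall>i\<le>e. vec.subspace (U i)" using assms(1) unfolding dsumU_def by blast
  let ?w = "\<lambda>i. pr e U i v - u i"
  have "\<forall>i\<le>e. ?w i \<in> U i"
    using sub pr_in[OF assms(1)] assms(2) vec.subspace_diff by blast
  moreover have "(\<Sum>i\<le>e. ?w i) = 0"
    by (simp only: sum_subtractf pr_sum[OF assms(1)] assms(3)[symmetric] diff_self)
  moreover have "\<forall>u. (\<forall>i\<le>e. u i \<in> U i) \<and> (\<Sum>i\<le>e. u i) = 0 \<longrightarrow> (\<forall>i\<le>e. u i = 0)"
    using assms(1) unfolding dsumU_def by (elim conjE)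
  ultimately have "\<forall>i\<le>e. ?w i = 0" by (metis (no_types, lifting))
  thus ?thesis using assms(4) by simp
qed

lemma pr_add: assumes "dsumU e U" shows "pr e U i (x + y) = pr e U i x + pr e U i y"
proof (cases "i \<le> e")
  case True
  have sub: "\<forall>i\<le>e. vec.subspace (U i)" using assms(1) unfolding dsumU_def by blast
  show ?thesis
    apply (rule pr_unique[where u="\<lambda>i. pr e U i x + pr e U i y", OF assms _ _ True, simplified])
    using sub pr_in[OF assms] apply (simp add: vec.subspace_add)
    by (simp add: sum.distrib pr_sum[OF assms])
qed (simp add: pr_out)

lemma pr_scale: assumes "dsumU e U" shows "pr e U i (c *s x) = c *s pr e U i x"
proof (cases "i \<le> e")
  case True
  have sub: "\<forall>i\<le>e. vec.subspace (U i)" using assms(1) unfolding dsumU_def by blast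
  show ?thesis
    apply (rule pr_unique[where u="\<lambda>i. c *s pr e U i x", OF assms _ _ True, simplified])
    using sub pr_in[OF assms] apply (simp add: vec.subspace_scale)
    by (simp add: vec.scale_sum_right[symmetric] pr_sum[OF assms])
qed (simp add: pr_out)

lemma pr_zero: assumes "dsumU e U" shows "pr e U i 0 = 0"
  using pr_scale[OF assms, of i 0 0] by simp

lemma pr_diff: assumes "dsumU e U" shows "pr e U i (x - y) = pr e U i x - pr e U i y"
  using pr_add[OF assms, of i "x - y" y] by simp

lemma pr_sumf: assumes "dsumU e U" "finite S" shows "pr e U i (\<Sum>k\<in>S. f k) = (\<Sum>k\<in>S. pr e U i (f k))"
  using assms(2) by induct (simp_all add: pr_zero[OF assms(1)] pr_add[OF assms(1)])

lemma pr_on: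
  assumes "dsumU e U" "j \<le> e" "v \<in> U j"
  shows "pr e U i v = (if i = j then v else 0)"
proof (cases "i \<le> e")
  case True
  have sub: "\<forall>i\<le>e. vec.subspace (U i)" using assms(1) unfolding dsumU_def by blast
  let ?u = "\<lambda>i. if i = j then v else 0"
  have 1: "\<forall>i\<le>e. ?u i \<in> U i"
  proof (intro allI impI)
    fix i assume "i \<le> e"
    thus "?u i \<in> U i" using sub assms(3) vec.subspace_0 by (cases "i = j") auto
  qed
  have 2: "v = (\<Sum>i\<le>e. ?u i)" using assms(2) by (subst sum.delta) auto
  have "pr e U i v = ?u i" by (rule pr_unique[OF assms(1) 1 2 True])
  thus ?thesis by simp
next
  case False
  hence "e < i" by simp
  hence "pr e U i v = 0" by (rule pr_out)
  moreover have "i \<noteq> j" using False assms(2) by auto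
  ultimately show ?thesis by simp
qed

lemma pr_idem: assumes "dsumU e U" "j \<le> e" shows "pr e U i (pr e U j v) = (if i = j then pr e U j v else 0)"
  using pr_on[OF assms pr_in[OF assms]] .

lemma pr_eq0: assumes "dsumU e U" "\<forall>i\<le>e. pr e U i v = 0" shows "v = 0"
  using pr_sum[OF assms(1), of v] assms(2) by simp

lemma single_comp:
  assumes "dsumU e U" "t \<le> e" "\<forall>m\<le>e. m \<noteq> t \<longrightarrow> pr e U m v = 0"
  shows "v = pr e U t v" "v \<in> U t"
proof -
  have "v = (\<Sum>i\<le>e. pr e U i v)" using pr_sum[OF assms(1)] by simp
  also have "\<dots> = (\<Sum>i\<le>e. if i = t then pr e U t v else 0)"
    by (rule sum.cong) (use assms(3) in auto)
  also have "\<dots> = pr e U t v" using assms(2) by (simp add: sum.delta)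
  finally show "v = pr e U t v" .
  thus "v \<in> U t" using pr_in[OF assms(1,2)] by metis
qed

lemma sum_rev: "(\<Sum>i\<le>e. f (e - i)) = (\<Sum>i\<le>(e::nat). f i)"
proof -
  have "(\<Sum>i\<le>e. f (e - i)) = (\<Sum>i<Suc e. f (Suc e - Suc i))" by (simp add: lessThan_Suc_atMost)
  also have "\<dots> = (\<Sum>i<Suc e. f i)" by (rule sum.nat_diff_reindex)
  finally show ?thesis by (simp add: lessThan_Suc_atMost)
qed

lemma dsumU_rev:
  assumes "dsumU e U" shows "dsumU e (\<lambda>i. U (e - i))"
  unfolding dsumU_def
proof (intro conjI allI impI)
  fix i assume "i \<le> e" thus "vec.subspace (U (e - i))" using assms unfolding dsumU_def by simp
next
  fix v
  obtain u where u: "\<forall>i\<le>e. u i \<in> U i" "v = (\<Sum>i\<le>e. u i)" using assms unfolding dsumU_def by blast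
  show "\<exists>u. (\<forall>i\<le>e. u i \<in> U (e - i)) \<and> v = (\<Sum>i\<le>e. u i)"
    by (rule exI[of _ "\<lambda>i. u (e - i)"]) (simp add: u sum_rev)
next
  fix u :: "nat \<Rightarrow> _" and i
  assume h: "(\<forall>i\<le>e. u i \<in> U (e - i)) \<and> (\<Sum>i\<le>e. u i) = 0" and i: "i \<le> e"
  have "\<forall>i\<le>e. u (e - i) \<in> U i" using h by (metis diff_diff_cancel diff_le_self)
  moreover have "(\<Sum>i\<le>e. u (e - i)) = 0" using h sum_rev[of "u" e] by simp
  moreover have "\<forall>u. (\<forall>i\<le>e. u i \<in> U i) \<and> (\<Sum>i\<le>e. u i) = 0 \<longrightarrow> (\<forall>i\<le>e. u i = 0)"
    using assms(1) unfolding dsumU_def by (elim conjE)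
  ultimately have "\<forall>i\<le>e. u (e - i) = 0" by (metis (no_types, lifting))
  thus "u i = 0" using i by (metis diff_diff_cancel diff_le_self)
qed

lemma pr_rev:
  assumes "dsumU e U" "i \<le> e"
  shows "pr e (\<lambda>i. U (e - i)) i v = pr e U (e - i) v"
proof -
  have "pr e (\<lambda>i. U (e - i)) i v = (\<lambda>i. pr e U (e - i) v) i"
  proof (rule pr_unique[OF dsumU_rev[OF assms(1)] _ _ assms(2)])
    show "\<forall>i\<le>e. pr e U (e - i) v \<in> U (e - i)" using pr_in[OF assms(1)] by simp
    show "v = (\<Sum>i\<le>e. pr e U (e - i) v)" using sum_rev[of "\<lambda>i. pr e U i v" e] pr_sum[OF assms(1)] by simp
  qed
  thus ?thesis by simp
qed


lemma eigenspace_iff: "v \<in> eigenspace A \<mu> \<longleftrightarrow> A *v v = \<mu> *s v"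
  by (simp add: eigenspace_def)

lemma tri_term:
  fixes A :: "'k::field^'n^'n"
  assumes ds: "dsumU e U"
    and tri: "\<forall>j\<le>e. \<forall>v\<in>U j. \<forall>m\<le>e. m \<noteq> Suc j \<longrightarrow> pr e U m (A *v v - \<theta> j *s v) = 0"
    and j: "j \<le> e" and low: "\<forall>k<j. pr e U k w = 0" and mj: "m \<le> j" and k: "k \<le> e"
  shows "pr e U m (A *v pr e U k w) = (if k = m then \<theta> m *s pr e U m w else 0)"
proof (cases "k < j")
  case True
  hence "pr e U k w = 0" using low by simp
  thus ?thesis by (auto simp: pr_zero[OF ds])
next
  case False
  have "pr e U m (A *v pr e U k w - \<theta> k *s pr e U k w) = 0"
    using tri k pr_in[OF ds k] False mj by auto
  hence "pr e U m (A *v pr e U k w) = pr e U m (\<theta> k *s pr e U k w)"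
    by (simp add: pr_diff[OF ds])
  also have "\<dots> = \<theta> k *s (if m = k then pr e U k w else 0)"
    by (simp add: pr_scale[OF ds] pr_idem[OF ds k])
  finally show ?thesis by auto
qed

lemma tri_lowest:
  fixes A :: "'k::field^'n^'n"
  assumes ds: "dsumU e U"
    and tri: "\<forall>j\<le>e. \<forall>v\<in>U j. \<forall>m\<le>e. m \<noteq> Suc j \<longrightarrow> pr e U m (A *v v - \<theta> j *s v) = 0"
    and j: "j \<le> e" and low: "\<forall>k<j. pr e U k w = 0" and mj: "m \<le> j"
  shows "pr e U m (A *v w) = (if m = j then \<theta> j *s pr e U j w else 0)"
proof -
  have "A *v w = A *v (\<Sum>k\<le>e. pr e U k w)" using pr_sum[OF ds] by simp
  also have "\<dots> = (\<Sum>k\<le>e. A *v pr e U k w)" by (simp add: vec.sum)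
  finally have "pr e U m (A *v w) = (\<Sum>k\<le>e. pr e U m (A *v pr e U k w))"
    by (simp add: pr_sumf[OF ds])
  also have "\<dots> = (\<Sum>k\<le>e. if k = m then \<theta> m *s pr e U m w else 0)"
    by (rule sum.cong[OF refl], rule tri_term[OF ds tri j low mj]) simp
  also have "\<dots> = \<theta> m *s pr e U m w" using mj j by (simp add: sum.delta)
  finally show ?thesis using low mj by auto
qed

lemma eig_loc:
  fixes A :: "'k::field^'n^'n"
  assumes ds: "dsumU e U"
    and tri: "\<forall>j\<le>e. \<forall>v\<in>U j. \<forall>m\<le>e. m \<noteq> Suc j \<longrightarrow> pr e U m (A *v v - \<theta> j *s v) = 0"
    and ev: "A *v w = \<mu> *s w" and nz: "w \<noteq> 0"
  shows "\<exists>j\<le>e. \<mu> = \<theta> j \<and> (\<forall>k<j. pr e U k w = 0) \<and> pr e U j w \<noteq> 0"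
proof -
  have ex: "\<exists>k. pr e U k w \<noteq> 0" using pr_eq0[OF ds] nz by blast
  define j where "j = (LEAST k. pr e U k w \<noteq> 0)"
  have pj: "pr e U j w \<noteq> 0" unfolding j_def by (rule LeastI_ex[OF ex])
  have low: "\<forall>k<j. pr e U k w = 0" unfolding j_def using not_less_Least by blast
  have je: "j \<le> e" using pj pr_out by (metis not_le)
  have "pr e U j (A *v w) = \<theta> j *s pr e U j w"
    using tri_lowest[OF ds tri je low, of j] by simp
  moreover have "pr e U j (A *v w) = \<mu> *s pr e U j w" using ev by (simp add: pr_scale[OF ds])
  ultimately have "\<mu> = \<theta> j" using pj by (metis vec.scale_cancel_right)
  thus ?thesis using je low pj by blast
qed

definition Sp :: "'k::field^'n^'n \<Rightarrow> (nat \<Rightarrow> 'k) \<Rightarrow> nat \<Rightarrow> nat \<Rightarrow> ('k^'n) set" where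
  "Sp A \<theta> e j = vec.span (\<Union>k\<in>{j..e}. eigenspace A (\<theta> k))"

lemma surj_shift:
  fixes A :: "'k::field^'n^'n"
  assumes inj: "inj_on \<theta> {..e}" and j: "j \<le> e" and x: "x \<in> Sp A \<theta> e (Suc j)"
  shows "\<exists>y\<in>Sp A \<theta> e (Suc j). A *v y - \<theta> j *s y = x"
  using x unfolding Sp_def
proof (induction rule: vec.span_induct_alt)
  case base
  show ?case by (rule bexI[of _ 0]) (simp_all add: vec.span_zero)
next
  case (step c x y)
  then obtain z where z: "z \<in> vec.span (\<Union>k\<in>{Suc j..e}. eigenspace A (\<theta> k))" "A *v z - \<theta> j *s z = y"
    by blast
  from step(1) obtain k where k: "k \<in> {Suc j..e}" "A *v x = \<theta> k *s x" by (auto simp: eigenspace_iff)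
  have kj: "k \<noteq> j" "k \<in> {..e}" "j \<in> {..e}" using k j by auto
  have "\<theta> k \<noteq> \<theta> j" using inj_onD[OF inj _ kj(2,3)] kj(1) by blast
  hence ne: "\<theta> k - \<theta> j \<noteq> 0" by simp
  let ?c = "c / (\<theta> k - \<theta> j)"
  have "A *v (?c *s x + z) - \<theta> j *s (?c *s x + z) = ?c *s (A *v x - \<theta> j *s x) + (A *v z - \<theta> j *s z)"
    by (simp add: vec.add vec.scale algebra_simps)
  also have "A *v x - \<theta> j *s x = (\<theta> k - \<theta> j) *s x" using k by (simp add: vector_sub_rdistrib)
  also have "?c *s ((\<theta> k - \<theta> j) *s x) + (A *v z - \<theta> j *s z) = (?c * (\<theta> k - \<theta> j)) *s x + y"
    using z(2) by (simp only: vector_smult_assoc)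
  also have "\<dots> = c *s x + y" using ne by simp
  finally show ?case
    apply (intro bexI[of _ "?c *s x + z"], assumption)
    apply (rule vec.span_add)
     apply (rule vec.span_scale, rule vec.span_base, rule step(1))
    by (rule z(1))
qed


lemma Sp_mono: "j \<le> j' \<Longrightarrow> Sp A \<theta> e j' \<subseteq> Sp A \<theta> e j"
  unfolding Sp_def by (rule vec.span_mono) (force intro: le_trans)

lemma stepC:
  fixes A :: "'k::field^'n^'n"
  assumes ds: "dsumU e U"
    and tri: "\<forall>j\<le>e. \<forall>v\<in>U j. \<forall>m\<le>e. m \<noteq> Suc j \<longrightarrow> pr e U m (A *v v - \<theta> j *s v) = 0"
    and inj: "inj_on \<theta> {..e}" and j: "j \<le> e"
    and hU: "Suc j \<le> e \<Longrightarrow> U (Suc j) \<subseteq> Sp A \<theta> e (Suc j)" and v: "v \<in> U j"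
  shows "\<exists>u\<in>eigenspace A (\<theta> j). v - u \<in> Sp A \<theta> e (Suc j)"
proof -
  let ?x = "A *v v - \<theta> j *s v"
  have comps: "\<forall>m\<le>e. m \<noteq> Suc j \<longrightarrow> pr e U m ?x = 0" using tri j v by blast
  have "?x \<in> Sp A \<theta> e (Suc j)"
  proof (cases "Suc j \<le> e")
    case True
    have "?x \<in> U (Suc j)" using single_comp(2)[OF ds True comps] .
    thus ?thesis using hU[OF True] by blast
  next
    case False
    have "\<forall>m\<le>e. pr e U m ?x = 0" using comps False by auto
    hence "?x = 0" by (rule pr_eq0[OF ds])
    thus ?thesis unfolding Sp_def by (simp add: vec.span_zero)
  qed
  then obtain y where y: "y \<in> Sp A \<theta> e (Suc j)" "A *v y - \<theta> j *s y = ?x"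
    using surj_shift[OF inj j] by blast
  have "A *v (v - y) - \<theta> j *s (v - y) = ?x - (A *v y - \<theta> j *s y)"
    by (simp add: vec.diff vector_ssub_ldistrib algebra_simps)
  hence "A *v (v - y) = \<theta> j *s (v - y)" using y(2) by simp
  hence "v - y \<in> eigenspace A (\<theta> j)" by (simp add: eigenspace_iff)
  moreover have "v - (v - y) \<in> Sp A \<theta> e (Suc j)" using y(1) by simp
  ultimately show ?thesis by blast
qed

lemma allD:
  fixes A :: "'k::field^'n^'n"
  assumes ds: "dsumU e U"
    and tri: "\<forall>j\<le>e. \<forall>v\<in>U j. \<forall>m\<le>e. m \<noteq> Suc j \<longrightarrow> pr e U m (A *v v - \<theta> j *s v) = 0"
    and inj: "inj_on \<theta> {..e}"
  shows "j \<le> Suc e \<Longrightarrow> \<forall>k. j \<le> k \<and> k \<le> e \<longrightarrow> U k \<subseteq> Sp A \<theta> e j"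
proof (induction j rule: inc_induct)
  case base
  then show ?case by auto
next
  case (step n)
  show ?case
  proof (intro allI impI subsetI)
    fix k v assume k: "n \<le> k \<and> k \<le> e" and v: "v \<in> U k"
    show "v \<in> Sp A \<theta> e n"
    proof (cases "k = n")
      case True
      have ne: "n \<le> e" using step(2) by simp
      have hU: "Suc n \<le> e \<Longrightarrow> U (Suc n) \<subseteq> Sp A \<theta> e (Suc n)" using step(3) by blast
      obtain u where u: "u \<in> eigenspace A (\<theta> n)" "v - u \<in> Sp A \<theta> e (Suc n)"
        using stepC[OF ds tri inj ne hU] v True by blast
      have "u \<in> Sp A \<theta> e n" unfolding Sp_def
        by (rule vec.span_base) (use u(1) ne in auto)
      moreover have "v - u \<in> Sp A \<theta> e n" using u(2) Sp_mono[of n "Suc n"] by auto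
      ultimately have "u + (v - u) \<in> Sp A \<theta> e n" unfolding Sp_def by (rule vec.span_add)
      thus ?thesis by simp
    next
      case False
      hence "Suc n \<le> k" using k by simp
      hence "v \<in> Sp A \<theta> e (Suc n)" using step(3) k v by blast
      thus ?thesis using Sp_mono[of n "Suc n"] by auto
    qed
  qed
qed

lemma triangular:
  fixes A :: "'k::field^'n^'n"
  assumes ds: "dsumU e U" and nz: "\<forall>i\<le>e. U i \<noteq> {0}" and inj: "inj_on \<theta> {..e}"
    and tri: "\<forall>j\<le>e. \<forall>v\<in>U j. \<forall>m\<le>e. m \<noteq> Suc j \<longrightarrow> pr e U m (A *v v - \<theta> j *s v) = 0"
  shows "vec.span (\<Union>k\<le>e. eigenspace A (\<theta> k)) = UNIV"
    and "{\<mu>. is_eigenvalue A \<mu>} = \<theta> ` {..e}"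
proof -
  have D0: "\<forall>k. k \<le> e \<longrightarrow> U k \<subseteq> Sp A \<theta> e 0" using allD[OF ds tri inj, of 0] by simp
  have Sp0: "Sp A \<theta> e 0 = vec.span (\<Union>k\<le>e. eigenspace A (\<theta> k))"
    unfolding Sp_def by (simp add: atLeast0AtMost)
  show "vec.span (\<Union>k\<le>e. eigenspace A (\<theta> k)) = UNIV"
  proof (rule set_eqI, rule iffI)
    fix v :: "'k^'n"
    have "(\<Sum>i\<le>e. pr e U i v) \<in> Sp A \<theta> e 0" unfolding Sp_def
      apply (rule vec.span_sum)
      using D0 pr_in[OF ds] unfolding Sp_def by blast
    thus "v \<in> vec.span (\<Union>k\<le>e. eigenspace A (\<theta> k))" using pr_sum[OF ds, of v] Sp0 by simp
  qed simp
  let ?F = "\<lambda>i. {w. \<forall>k<i. pr e U k w = 0}"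
  have Fsub: "vec.subspace (?F i)" for i
    by (rule vec.subspaceI) (auto simp: pr_zero[OF ds] pr_add[OF ds] pr_scale[OF ds])
  have SpF: "Sp A \<theta> e (Suc j) \<subseteq> ?F (Suc j)" for j
    unfolding Sp_def
  proof (rule vec.span_minimal[OF _ Fsub], rule subsetI)
    fix w assume "w \<in> (\<Union>k\<in>{Suc j..e}. eigenspace A (\<theta> k))"
    then obtain k where k: "k \<in> {Suc j..e}" "A *v w = \<theta> k *s w" by (auto simp: eigenspace_iff)
    show "w \<in> ?F (Suc j)"
    proof (cases "w = 0")
      case True thus ?thesis by (simp add: pr_zero[OF ds])
    next
      case False
      obtain j' where j': "j' \<le> e" "\<theta> k = \<theta> j'" "\<forall>k<j'. pr e U k w = 0"
        using eig_loc[OF ds tri k(2) False] by blast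
      have "k = j'" using inj_onD[OF inj j'(2)] k j'(1) by auto
      thus ?thesis using j'(3) k(1) by auto
    qed
  qed
  show "{\<mu>. is_eigenvalue A \<mu>} = \<theta> ` {..e}"
  proof (rule set_eqI, rule iffI)
    fix \<mu> assume "\<mu> \<in> {\<mu>. is_eigenvalue A \<mu>}"
    then obtain w where w: "w \<in> eigenspace A \<mu>" "w \<noteq> 0"
      unfolding is_eigenvalue_def eigenspace_def by auto
    obtain j where "j \<le> e" "\<mu> = \<theta> j" using eig_loc[OF ds tri _ w(2), of \<mu>] w(1)
      by (auto simp: eigenspace_iff)
    thus "\<mu> \<in> \<theta> ` {..e}" by auto
  next
    fix \<mu> assume "\<mu> \<in> \<theta> ` {..e}"
    then obtain j where j: "j \<le> e" "\<mu> = \<theta> j" by auto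
    obtain v where v: "v \<in> U j" "v \<noteq> 0" using nz j(1) vec.subspace_0 ds unfolding dsumU_def
      by (metis insertI1 subsetI subset_antisym singletonD)
    have hU: "Suc j \<le> e \<Longrightarrow> U (Suc j) \<subseteq> Sp A \<theta> e (Suc j)"
      using allD[OF ds tri inj, of "Suc j"] by simp
    obtain u where u: "u \<in> eigenspace A (\<theta> j)" "v - u \<in> Sp A \<theta> e (Suc j)"
      using stepC[OF ds tri inj j(1) hU v(1)] by blast
    have "u \<noteq> 0"
    proof
      assume "u = 0"
      hence "v \<in> ?F (Suc j)" using u(2) SpF by auto
      hence "pr e U j v = 0" by simp
      moreover have "pr e U j v = v" using pr_on[OF ds j(1) v(1)] by simp
      ultimately show False using v(2) by simp
    qed
    hence "eigenspace A \<mu> \<noteq> {0}" using u(1) j(2) by auto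
    thus "\<mu> \<in> {\<mu>. is_eigenvalue A \<mu>}" by (simp add: is_eigenvalue_def)
  qed
qed


lemma span_sums:
  fixes E :: "nat \<Rightarrow> ('k::field^'n) set"
  assumes fin: "finite S" and sub: "\<forall>k\<in>S. vec.subspace (E k)" and x: "x \<in> vec.span (\<Union>k\<in>S. E k)"
  shows "\<exists>w. (\<forall>k\<in>S. w k \<in> E k) \<and> x = (\<Sum>k\<in>S. w k)"
  using x
proof (induction rule: vec.span_induct_alt)
  case base
  show ?case by (rule exI[of _ "\<lambda>_. 0"]) (use sub vec.subspace_0 in auto)
next
  case (step c x y)
  from step(1) obtain k0 where k0: "k0 \<in> S" "x \<in> E k0" by blast
  from step(2) obtain w where w: "\<forall>k\<in>S. w k \<in> E k" "y = (\<Sum>k\<in>S. w k)" by blast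
  let ?w = "\<lambda>k. w k + (if k = k0 then c *s x else 0)"
  have "\<forall>k\<in>S. ?w k \<in> E k"
  proof
    fix k assume k: "k \<in> S"
    show "?w k \<in> E k"
    proof (cases "k = k0")
      case True thus ?thesis using k w(1) k0 sub by (simp add: vec.subspace_add vec.subspace_scale)
    next
      case False thus ?thesis using k w(1) by simp
    qed
  qed
  moreover have "(\<Sum>k\<in>S. ?w k) = c *s x + y"
  proof -
    have "(\<Sum>k\<in>S. ?w k) = (\<Sum>k\<in>S. w k) + (\<Sum>k\<in>S. (if k = k0 then c *s x else 0))"
      by (rule sum.distrib)
    also have "(\<Sum>k\<in>S. (if k = k0 then c *s x else 0)) = c *s x"
      using k0(1) fin by (simp add: sum.delta)
    finally have "(\<Sum>k\<in>S. ?w k) = (\<Sum>k\<in>S. w k) + c *s x" .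
    thus ?thesis using w(2) by (metis add.commute)
  qed
  ultimately show ?case by (intro exI[of _ ?w] conjI) (simp_all only: eq_commute)
qed

lemma indep:
  fixes A :: "'k::field^'n^'n"
  assumes "finite S"
  shows "inj_on \<mu> S \<Longrightarrow> \<forall>k\<in>S. A *v w k = \<mu> k *s w k \<Longrightarrow> (\<Sum>k\<in>S. w k) = 0 \<Longrightarrow> \<forall>k\<in>S. w k = 0"
  using assms
proof (induction S arbitrary: w rule: finite_induct)
  case empty
  then show ?case by simp
next
  case (insert m S)
  let ?w = "\<lambda>k. (\<mu> k - \<mu> m) *s w k"
  have inj: "inj_on \<mu> S" using insert(4) by (simp add: inj_on_insert)
  have ev: "\<forall>k\<in>S. A *v ?w k = \<mu> k *s ?w k"
  proof
    fix k assume k: "k \<in> S"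
    have "A *v ?w k = (\<mu> k - \<mu> m) *s (A *v w k)" by (rule vec.scale)
    also have "\<dots> = (\<mu> k - \<mu> m) *s (\<mu> k *s w k)" using insert(5) k by simp
    also have "\<dots> = \<mu> k *s ?w k" by (simp only: vector_smult_assoc mult.commute)
    finally show "A *v ?w k = \<mu> k *s ?w k" .
  qed
  have "0 = A *v (\<Sum>k\<in>insert m S. w k) - \<mu> m *s (\<Sum>k\<in>insert m S. w k)" using insert(6) by simp
  also have "\<dots> = (\<Sum>k\<in>insert m S. A *v w k - \<mu> m *s w k)"
    by (simp add: vec.sum vec.scale_sum_right sum_subtractf)
  also have "\<dots> = (\<Sum>k\<in>insert m S. ?w k)"
    by (rule sum.cong[OF refl]) (use insert(5) in \<open>auto simp add: vector_sub_rdistrib\<close>)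
  also have "\<dots> = (\<Sum>k\<in>S. ?w k)" using insert(1,2) by simp
  finally have "\<forall>k\<in>S. ?w k = 0" using insert(3)[OF inj ev] by simp
  moreover have "\<forall>k\<in>S. \<mu> k \<noteq> \<mu> m" using insert(4,2) by (auto simp: inj_on_def)
  ultimately have S0: "\<forall>k\<in>S. w k = 0" by simp
  hence "w m = 0" using insert(6,1,2) by simp
  thus ?case using S0 by simp
qed

lemma sumA:
  fixes A :: "'k::field^'n^'n"
  assumes "\<forall>k\<in>S. A *v w k = \<theta> k *s w k"
  shows "A *v (\<Sum>k\<in>S. g k *s w k) = (\<Sum>k\<in>S. (g k * \<theta> k) *s w k)"
  by (simp add: vec.sum vec.scale assms vector_smult_assoc)


lemma comb4:
  fixes w :: "nat \<Rightarrow> 'k::field^'n"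
  shows "(\<Sum>k\<in>S. a k *s w k) - x *s (\<Sum>k\<in>S. b k *s w k) + y *s (\<Sum>k\<in>S. c k *s w k) - z *s (\<Sum>k\<in>S. d k *s w k)
     = (\<Sum>k\<in>S. (a k - x * b k + y * c k - z * d k) *s w k)"
  by (simp add: vec.scale_sum_right sum_subtractf[symmetric] sum.distrib[symmetric] vector_smult_assoc
      vector_sub_rdistrib vector_sadd_rdistrib)

lemma serre_std:
  fixes A B :: "'k::field^'n^'n" and \<theta> :: "nat \<Rightarrow> 'k" and c :: 'k
  assumes span: "vec.span (\<Union>k\<le>d. eigenspace A (\<theta> k)) = UNIV"
    and ev: "{\<mu>. is_eigenvalue A \<mu>} = \<theta> ` {..d}" and inj: "inj_on \<theta> {..d}"
    and S: "\<forall>v. A *v (A *v (A *v (B *v v))) - c *s (A *v (A *v (B *v (A *v v))))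
               + c *s (A *v (B *v (A *v (A *v v)))) - B *v (A *v (A *v (A *v v))) = 0"
    and P: "\<forall>i\<le>d. \<forall>k\<le>d. \<theta> k ^ 3 - c * \<theta> k ^ 2 * \<theta> i + c * \<theta> k * \<theta> i ^ 2 - \<theta> i ^ 3 = 0
              \<longrightarrow> k = i \<or> k = Suc i \<or> Suc k = i"
  shows "standard_ordering A B d \<theta>"
  unfolding standard_ordering_def
proof (intro conjI allI impI ballI)
  show "inj_on \<theta> {0..d}" using inj by (simp add: atLeast0AtMost)
  show "\<theta> ` {0..d} = {\<mu>. is_eigenvalue A \<mu>}" using ev by (simp add: atLeast0AtMost)
next
  fix i v assume i: "i \<le> d" and v: "v \<in> eigenspace A (\<theta> i)"
  have Av: "A *v v = \<theta> i *s v" using v by (simp add: eigenspace_iff)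
  have sub: "\<forall>k\<in>{..d}. vec.subspace (eigenspace A (\<theta> k))"
  proof
    fix k show "vec.subspace (eigenspace A (\<theta> k))"
      by (rule vec.subspaceI) (auto simp: eigenspace_iff vec.add vec.scale algebra_simps
          vector_smult_assoc mult.commute)
  qed
  obtain w where w: "\<forall>k\<in>{..d}. w k \<in> eigenspace A (\<theta> k)" "B *v v = (\<Sum>k\<in>{..d}. w k)"
    using span_sums[OF _ sub, of "B *v v"] span by auto
  have Aw: "\<forall>k\<in>{..d}. A *v w k = \<theta> k *s w k" using w(1) by (simp add: eigenspace_iff)
  have Bv: "B *v v = (\<Sum>k\<in>{..d}. 1 *s w k)" using w(2) by simp
  have A1: "A *v (B *v v) = (\<Sum>k\<in>{..d}. \<theta> k *s w k)"
    unfolding Bv sumA[OF Aw] by simp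
  have A2: "A *v (A *v (B *v v)) = (\<Sum>k\<in>{..d}. (\<theta> k * \<theta> k) *s w k)"
    unfolding A1 sumA[OF Aw] by simp
  have A3: "A *v (A *v (A *v (B *v v))) = (\<Sum>k\<in>{..d}. (\<theta> k * \<theta> k * \<theta> k) *s w k)"
    unfolding A2 sumA[OF Aw] by simp
  have "0 = A *v (A *v (A *v (B *v v))) - c *s (A *v (A *v (B *v (A *v v))))
               + c *s (A *v (B *v (A *v (A *v v)))) - B *v (A *v (A *v (A *v v)))"
    using S by simp
  also have "\<dots> = A *v (A *v (A *v (B *v v))) - (c * \<theta> i) *s (A *v (A *v (B *v v)))
               + (c * \<theta> i * \<theta> i) *s (A *v (B *v v)) - (\<theta> i * \<theta> i * \<theta> i) *s (B *v v)"
    by (simp add: Av vec.scale vector_smult_assoc mult.assoc)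
  also have "\<dots> = (\<Sum>k\<in>{..d}. (\<theta> k * \<theta> k * \<theta> k) *s w k) - (c * \<theta> i) *s (\<Sum>k\<in>{..d}. (\<theta> k * \<theta> k) *s w k)
       + (c * \<theta> i * \<theta> i) *s (\<Sum>k\<in>{..d}. \<theta> k *s w k) - (\<theta> i * \<theta> i * \<theta> i) *s (\<Sum>k\<in>{..d}. 1 *s w k)"
    by (subst A3, subst A2, subst A1, subst Bv) (rule refl)
  also have "\<dots> = (\<Sum>k\<in>{..d}. (\<theta> k * \<theta> k * \<theta> k - (c * \<theta> i) * (\<theta> k * \<theta> k)
        + (c * \<theta> i * \<theta> i) * \<theta> k - (\<theta> i * \<theta> i * \<theta> i) * 1) *s w k)"
    by (rule comb4)
  also have "\<dots> = (\<Sum>k\<in>{..d}. (\<theta> k ^ 3 - c * \<theta> k ^ 2 * \<theta> i + c * \<theta> k * \<theta> i ^ 2 - \<theta> i ^ 3) *s w k)"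
  proof -
    have "\<And>k. (\<theta> k * \<theta> k * \<theta> k - (c * \<theta> i) * (\<theta> k * \<theta> k)
        + (c * \<theta> i * \<theta> i) * \<theta> k - (\<theta> i * \<theta> i * \<theta> i) * 1)
        = (\<theta> k ^ 3 - c * \<theta> k ^ 2 * \<theta> i + c * \<theta> k * \<theta> i ^ 2 - \<theta> i ^ 3)"
      by (simp add: power3_eq_cube power2_eq_square algebra_simps)
    thus ?thesis by (simp only:)
  qed
  finally have Z: "(\<Sum>k\<in>{..d}. (\<theta> k ^ 3 - c * \<theta> k ^ 2 * \<theta> i + c * \<theta> k * \<theta> i ^ 2 - \<theta> i ^ 3) *s w k) = 0"
    by simp
  have "\<forall>k\<in>{..d}. (\<theta> k ^ 3 - c * \<theta> k ^ 2 * \<theta> i + c * \<theta> k * \<theta> i ^ 2 - \<theta> i ^ 3) *s w k = 0"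
  proof (rule indep[where A=A, OF _ inj _ Z])
    show "\<forall>k\<in>{..d}. A *v ((\<theta> k ^ 3 - c * \<theta> k ^ 2 * \<theta> i + c * \<theta> k * \<theta> i ^ 2 - \<theta> i ^ 3) *s w k)
       = \<theta> k *s ((\<theta> k ^ 3 - c * \<theta> k ^ 2 * \<theta> i + c * \<theta> k * \<theta> i ^ 2 - \<theta> i ^ 3) *s w k)"
    proof
      fix k assume k: "k \<in> {..d}"
      show "A *v ((\<theta> k ^ 3 - c * \<theta> k ^ 2 * \<theta> i + c * \<theta> k * \<theta> i ^ 2 - \<theta> i ^ 3) *s w k)
       = \<theta> k *s ((\<theta> k ^ 3 - c * \<theta> k ^ 2 * \<theta> i + c * \<theta> k * \<theta> i ^ 2 - \<theta> i ^ 3) *s w k)"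
        unfolding vec.scale Aw[rule_format, OF k] by (simp only: vector_smult_assoc mult.commute)
    qed
  qed simp
  hence w0: "\<forall>k\<le>d. \<not> (k = i \<or> k = Suc i \<or> Suc k = i) \<longrightarrow> w k = 0"
  proof (intro allI impI)
    fix k assume H: "\<forall>k\<in>{..d}. (\<theta> k ^ 3 - c * \<theta> k ^ 2 * \<theta> i + c * \<theta> k * \<theta> i ^ 2 - \<theta> i ^ 3) *s w k = 0"
      and k: "k \<le> d" and nk: "\<not> (k = i \<or> k = Suc i \<or> Suc k = i)"
    have "\<theta> k ^ 3 - c * \<theta> k ^ 2 * \<theta> i + c * \<theta> k * \<theta> i ^ 2 - \<theta> i ^ 3 \<noteq> 0"
      using P i k nk by blast
    moreover have "(\<theta> k ^ 3 - c * \<theta> k ^ 2 * \<theta> i + c * \<theta> k * \<theta> i ^ 2 - \<theta> i ^ 3) *s w k = 0"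
      using H k by blast
    ultimately show "w k = 0" using vec.scale_eq_0_iff by blast
  qed
  let ?f1 = "\<lambda>k. if Suc k = i then w k else 0"
  let ?f2 = "\<lambda>k. if k = i then w k else 0"
  let ?f3 = "\<lambda>k. if k = Suc i then w k else 0"
  have pw: "w k = ?f1 k + ?f2 k + ?f3 k" if "k \<in> {..d}" for k
    using w0 that by auto
  have "B *v v = (\<Sum>k\<in>{..d}. ?f1 k) + (\<Sum>k\<in>{..d}. ?f2 k) + (\<Sum>k\<in>{..d}. ?f3 k)"
    unfolding w(2) sum.distrib[symmetric] by (rule sum.cong[OF refl pw])
  moreover have "(\<Sum>k\<in>{..d}. ?f1 k) \<in> Esp A d \<theta> (int i - 1)"
  proof (cases i)
    case 0
    thus ?thesis by (simp add: Esp_def)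
  next
    case (Suc i')
    have "(\<Sum>k\<in>{..d}. ?f1 k) = (\<Sum>k\<in>{..d}. if k = i' then w k else 0)" using Suc by simp
    also have "\<dots> = w i'" using Suc i by (simp add: sum.delta)
    finally show ?thesis using Suc i w(1) by (simp add: Esp_def)
  qed
  moreover have "(\<Sum>k\<in>{..d}. ?f2 k) \<in> Esp A d \<theta> (int i)"
    using i w(1) by (simp add: Esp_def sum.delta)
  moreover have "(\<Sum>k\<in>{..d}. ?f3 k) \<in> Esp A d \<theta> (int i + 1)"
  proof (cases "Suc i \<le> d")
    case True
    have "nat (int i + 1) = Suc i" by simp
    thus ?thesis using True w(1) by (simp add: Esp_def sum.delta)
  next
    case False
    thus ?thesis by (simp add: Esp_def sum.delta)
  qed
  ultimately show "B *v v \<in> {x + y + z |x y z. x \<in> Esp A d \<theta> (int i - 1) \<and> y \<in> Esp A d \<theta> (int i)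
                                 \<and> z \<in> Esp A d \<theta> (int i + 1)}" by blast
qed


lemma prK:
  fixes K :: "'k::field^'n^'n"
  assumes ds: "dsumU e U" and Kact: "\<forall>j\<le>e. \<forall>v\<in>U j. K *v v = lm j *s v" and m: "m \<le> e"
  shows "pr e U m (K *v x) = lm m *s pr e U m x"
proof -
  have "K *v x = K *v (\<Sum>k\<le>e. pr e U k x)" using pr_sum[OF ds] by simp
  also have "\<dots> = (\<Sum>k\<le>e. K *v pr e U k x)" by (simp add: vec.sum)
  also have "\<dots> = (\<Sum>k\<le>e. lm k *s pr e U k x)"
    by (rule sum.cong[OF refl]) (use Kact pr_in[OF ds] in auto)
  finally have "pr e U m (K *v x) = (\<Sum>k\<le>e. lm k *s pr e U m (pr e U k x))"
    by (simp add: pr_sumf[OF ds] pr_scale[OF ds])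
  also have "\<dots> = (\<Sum>k\<le>e. if k = m then lm m *s pr e U m x else 0)"
    by (rule sum.cong[OF refl]) (auto simp: pr_idem[OF ds])
  also have "\<dots> = lm m *s pr e U m x" using m by (simp add: sum.delta)
  finally show ?thesis .
qed

lemma shift:
  fixes K Y :: "'k::field^'n^'n"
  assumes ds: "dsumU e U"
    and Kact: "\<forall>j\<le>e. \<forall>v\<in>U j. K *v v = lm j *s v"
    and lnz: "\<forall>j\<le>e. lm j \<noteq> 0"
    and rel: "\<forall>v. \<alpha> *s (K *v (Y *v v)) - \<beta> *s (Y *v (K *v v)) = \<gamma> *s v"
    and ab: "\<alpha> - \<beta> = \<gamma>" and g: "\<gamma> \<noteq> 0"
    and j: "j \<le> e" and v: "v \<in> U j"
    and cond: "\<forall>m\<le>e. m \<noteq> j \<longrightarrow> \<alpha> * lm m = \<beta> * lm j \<longrightarrow> P m"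
  shows "\<forall>m\<le>e. \<not> P m \<longrightarrow> pr e U m (Y *v v - inverse (lm j) *s v) = 0"
proof (intro allI impI)
  fix m assume m: "m \<le> e" and nP: "\<not> P m"
  have Kv: "K *v v = lm j *s v" using Kact j v by blast
  have "\<alpha> *s (K *v (Y *v v)) - (\<beta> * lm j) *s (Y *v v) = \<gamma> *s v"
    using rel[rule_format, of v] by (simp add: Kv vec.scale vector_smult_assoc)
  hence "pr e U m (\<alpha> *s (K *v (Y *v v)) - (\<beta> * lm j) *s (Y *v v)) = pr e U m (\<gamma> *s v)" by simp
  hence "\<alpha> *s (lm m *s pr e U m (Y *v v)) - (\<beta> * lm j) *s pr e U m (Y *v v) = \<gamma> *s pr e U m v"
    by (simp add: pr_diff[OF ds] pr_scale[OF ds] prK[OF ds Kact m])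
  hence E: "(\<alpha> * lm m - \<beta> * lm j) *s pr e U m (Y *v v) = \<gamma> *s (if m = j then v else 0)"
    by (simp add: vector_smult_assoc vector_sub_rdistrib pr_on[OF ds j v])
  show "pr e U m (Y *v v - inverse (lm j) *s v) = 0"
  proof (cases "m = j")
    case True
    have "(\<gamma> * lm j) *s pr e U m (Y *v v) = \<gamma> *s v"
      using E True ab by (simp add: algebra_simps)
    hence "inverse (\<gamma> * lm j) *s ((\<gamma> * lm j) *s pr e U m (Y *v v)) = inverse (\<gamma> * lm j) *s (\<gamma> *s v)"
      by simp
    moreover have lj: "lm j \<noteq> 0" using lnz j by blast
    ultimately have "(inverse (\<gamma> * lm j) * (\<gamma> * lm j)) *s pr e U m (Y *v v) = (inverse (\<gamma> * lm j) * \<gamma>) *s v"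
      by (simp only: vector_smult_assoc)
    moreover have "inverse (\<gamma> * lm j) * (\<gamma> * lm j) = 1" using g lj by (simp add: field_simps)
    moreover have "inverse (\<gamma> * lm j) * \<gamma> = inverse (lm j)" using g lj by (simp add: field_simps)
    ultimately have "pr e U m (Y *v v) = inverse (lm j) *s v" by simp
    thus ?thesis using True by (simp add: pr_diff[OF ds] pr_scale[OF ds] pr_on[OF ds j v])
  next
    case False
    have "\<alpha> * lm m - \<beta> * lm j \<noteq> 0" using cond m False nP by auto
    hence "pr e U m (Y *v v) = 0" using E False by simp
    thus ?thesis using False by (simp add: pr_diff[OF ds] pr_scale[OF ds] pr_on[OF ds j v])
  qed
qed

lemma powi_inj:
  fixes q :: "'k::field"
  assumes q: "q \<noteq> 0" and nr: "not_root_of_unity q" and eq: "q powi m = q powi n"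
  shows "m = n"
proof (rule ccontr)
  assume "m \<noteq> n"
  then obtain a b where ab: "a < b" "q powi a = q powi b" using eq
    by (metis linorder_neqE)
  have "q powi b = q powi a * q powi (b - a)" using q by (simp add: power_int_add[symmetric])
  hence "q powi (b - a) = 1" using ab(2) q by (simp add: power_int_eq_0_iff)
  moreover have "b - a = int (nat (b - a))" using ab(1) by simp
  ultimately have "q ^ nat (b - a) = 1" by (metis power_int_of_nat)
  moreover have "nat (b - a) > 0" using ab(1) by simp
  ultimately show False using nr unfolding not_root_of_unity_def by blast
qed

lemma qrel:
  fixes q :: "'k::field"
  assumes q: "q \<noteq> 0" and nr: "not_root_of_unity q" and eq: "q * q powi a = inverse q * q powi b"
  shows "a + 2 = b"
proof -
  have "q powi (a + 2) = q * q * q powi a" using q by (simp add: power_int_add power2_eq_square mult_ac)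
  also have "\<dots> = q * (inverse q * q powi b)" using eq by (simp add: mult.assoc)
  also have "\<dots> = q powi b" using q by simp
  finally show ?thesis using powi_inj[OF q nr] by blast
qed

lemma inv_powi: "inverse ((q::'k::field) powi a) = q powi (- a)"
  by (simp add: power_int_minus)

lemma image_rev: "(\<lambda>i. f (e - i)) ` {..(e::nat)} = f ` {..e}"
proof
  show "(\<lambda>i. f (e - i)) ` {..e} \<subseteq> f ` {..e}" by auto
  show "f ` {..e} \<subseteq> (\<lambda>i. f (e - i)) ` {..e}"
  proof
    fix x assume "x \<in> f ` {..e}"
    then obtain i where "i \<le> e" "x = f i" by auto
    thus "x \<in> (\<lambda>i. f (e - i)) ` {..e}" by (intro image_eqI[of _ _ "e - i"]) auto
  qed
qed


lemma raise_case:
  fixes K Y :: "'k::field^'n^'n"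
  assumes ds: "dsumU e U" and nz: "\<forall>i\<le>e. U i \<noteq> {0}"
    and Kact: "\<forall>j\<le>e. \<forall>v\<in>U j. K *v v = lm j *s v"
    and lnz: "\<forall>j\<le>e. lm j \<noteq> 0"
    and rel: "\<forall>v. \<alpha> *s (K *v (Y *v v)) - \<beta> *s (Y *v (K *v v)) = \<gamma> *s v"
    and ab: "\<alpha> - \<beta> = \<gamma>" and g: "\<gamma> \<noteq> 0"
    and cond: "\<forall>j\<le>e. \<forall>m\<le>e. m \<noteq> j \<longrightarrow> \<alpha> * lm m = \<beta> * lm j \<longrightarrow> m = Suc j"
    and inj: "inj_on (\<lambda>j. a * inverse (lm j)) {..e}"
  shows "vec.span (\<Union>\<mu>\<in>(\<lambda>j. a * inverse (lm j)) ` {..e}. eigenspace (mat a ** Y) \<mu>) = UNIV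
     \<and> {\<mu>. is_eigenvalue (mat a ** Y) \<mu>} = (\<lambda>j. a * inverse (lm j)) ` {..e}"
proof -
  have tri: "\<forall>j\<le>e. \<forall>v\<in>U j. \<forall>m\<le>e. m \<noteq> Suc j \<longrightarrow>
      pr e U m ((mat a ** Y) *v v - (a * inverse (lm j)) *s v) = 0"
  proof (intro allI impI ballI)
    fix j v m assume j: "j \<le> e" and v: "v \<in> U j" and m: "m \<le> e" and mj: "m \<noteq> Suc j"
    have "\<forall>m\<le>e. \<not> (m = Suc j) \<longrightarrow> pr e U m (Y *v v - inverse (lm j) *s v) = 0"
      by (rule shift[OF ds Kact lnz rel ab g j v]) (use cond j in blast)
    hence H: "pr e U m (Y *v v - inverse (lm j) *s v) = 0" using m mj by blast
    have eq: "(mat a ** Y) *v v - (a * inverse (lm j)) *s v = a *s (Y *v v - inverse (lm j) *s v)"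
      by (simp add: mat_mult_mv vector_ssub_ldistrib vector_smult_assoc)
    show "pr e U m ((mat a ** Y) *v v - (a * inverse (lm j)) *s v) = 0"
      unfolding eq pr_scale[OF ds] H by simp
  qed
  have T1: "vec.span (\<Union>k\<le>e. eigenspace (mat a ** Y) (a * inverse (lm k))) = UNIV"
    by (rule triangular(1)[OF ds nz inj tri])
  have T2: "{\<mu>. is_eigenvalue (mat a ** Y) \<mu>} = (\<lambda>j. a * inverse (lm j)) ` {..e}"
    by (rule triangular(2)[OF ds nz inj tri])
  show ?thesis using T1 T2 by (simp add: image_image)
qed

lemma lower_case:
  fixes K Y :: "'k::field^'n^'n"
  assumes ds: "dsumU e U" and nz: "\<forall>i\<le>e. U i \<noteq> {0}"
    and Kact: "\<forall>j\<le>e. \<forall>v\<in>U j. K *v v = lm j *s v"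
    and lnz: "\<forall>j\<le>e. lm j \<noteq> 0"
    and rel: "\<forall>v. \<alpha> *s (K *v (Y *v v)) - \<beta> *s (Y *v (K *v v)) = \<gamma> *s v"
    and ab: "\<alpha> - \<beta> = \<gamma>" and g: "\<gamma> \<noteq> 0"
    and cond: "\<forall>j\<le>e. \<forall>m\<le>e. m \<noteq> j \<longrightarrow> \<alpha> * lm m = \<beta> * lm j \<longrightarrow> Suc m = j"
    and inj: "inj_on (\<lambda>j. a * inverse (lm (e - j))) {..e}"
  shows "vec.span (\<Union>\<mu>\<in>(\<lambda>j. a * inverse (lm j)) ` {..e}. eigenspace (mat a ** Y) \<mu>) = UNIV
     \<and> {\<mu>. is_eigenvalue (mat a ** Y) \<mu>} = (\<lambda>j. a * inverse (lm j)) ` {..e}"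
proof -
  have "vec.span (\<Union>\<mu>\<in>(\<lambda>j. a * inverse (lm (e - j))) ` {..e}. eigenspace (mat a ** Y) \<mu>) = UNIV
     \<and> {\<mu>. is_eigenvalue (mat a ** Y) \<mu>} = (\<lambda>j. a * inverse (lm (e - j))) ` {..e}"
  proof (rule raise_case[OF dsumU_rev[OF ds], where lm="\<lambda>j. lm (e - j)", OF _ _ _ rel ab g _ inj])
    show "\<forall>i\<le>e. U (e - i) \<noteq> {0}" using nz by simp
    show "\<forall>j\<le>e. \<forall>v\<in>U (e - j). K *v v = lm (e - j) *s v" using Kact by simp
    show "\<forall>j\<le>e. lm (e - j) \<noteq> 0" using lnz by simp
    show "\<forall>j\<le>e. \<forall>m\<le>e. m \<noteq> j \<longrightarrow> \<alpha> * lm (e - m) = \<beta> * lm (e - j) \<longrightarrow> m = Suc j"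
    proof (intro allI impI)
      fix j m assume j: "j \<le> e" and m: "m \<le> e" and mj: "m \<noteq> j" and eq: "\<alpha> * lm (e - m) = \<beta> * lm (e - j)"
      have "e - m \<noteq> e - j" using j m mj by simp
      hence "Suc (e - m) = e - j" using cond eq by simp
      thus "m = Suc j" using j m by simp
    qed
  qed
  moreover have "(\<lambda>j. a * inverse (lm (e - j))) ` {..e} = (\<lambda>j. a * inverse (lm j)) ` {..e}"
    by (rule image_rev)
  ultimately show ?thesis by simp
qed

lemma qint3_eq:
  fixes q :: "'k::field"
  assumes q: "q \<noteq> 0" and d: "q - inverse q \<noteq> 0"
  shows "qint3 q = q^2 + 1 + inverse q ^ 2"
proof -
  have "(q - inverse q) * (q^2 + 1 + inverse q ^ 2) = q ^ 3 - inverse q ^ 3"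
    using q by (simp add: field_simps power2_eq_square power3_eq_cube)
  thus ?thesis unfolding qint3_def using d by (simp add: field_simps)
qed

lemma pcond:
  fixes q b :: "'k::field"
  assumes q: "q \<noteq> 0" and nr: "not_root_of_unity q" and d: "q - inverse q \<noteq> 0" and b: "b \<noteq> 0"
    and z: "(b * q powi m) ^ 3 - qint3 q * (b * q powi m) ^ 2 * (b * q powi n)
            + qint3 q * (b * q powi m) * (b * q powi n) ^ 2 - (b * q powi n) ^ 3 = 0"
  shows "m = n \<or> m = n + 2 \<or> m + 2 = n"
proof -
  define x where "x = b * q powi m"
  define y where "y = b * q powi n"
  define r where "r = inverse q"
  have qr: "q * r = 1" using q unfolding r_def by simp
  have z': "x ^ 3 - (q^2 + 1 + r^2) * x ^ 2 * y + (q^2 + 1 + r^2) * x * y ^ 2 - y ^ 3 = 0"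
    using z unfolding x_def[symmetric] y_def[symmetric] qint3_eq[OF q d] r_def[symmetric] .
  have "(x - y) * (x - q^2 * y) * (x - r ^ 2 * y) = x ^ 3 - (q^2 + 1 + r^2) * x ^ 2 * y + (q^2 + 1 + r^2) * x * y ^ 2 - y ^ 3"
    using qr by algebra
  hence "(x - y) * (x - q^2 * y) * (x - inverse q ^ 2 * y) = 0" using z' unfolding r_def by simp
  hence "x = y \<or> x = q^2 * y \<or> x = inverse q ^ 2 * y" by simp
  moreover have "x = y \<Longrightarrow> m = n"
    using powi_inj[OF q nr] b unfolding x_def y_def by simp
  moreover have "x = q^2 * y \<Longrightarrow> m = n + 2"
  proof -
    assume "x = q^2 * y"
    hence "q powi m = q powi (n + 2)" using b q unfolding x_def y_def
      by (simp add: power_int_add power2_eq_square mult_ac)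
    thus ?thesis using powi_inj[OF q nr] by blast
  qed
  moreover have "x = inverse q ^ 2 * y \<Longrightarrow> m + 2 = n"
  proof -
    assume "x = inverse q ^ 2 * y"
    hence "q * q * x = y" using q by (simp add: field_simps power2_eq_square)
    hence "q powi (m + 2) = q powi n" using b q unfolding x_def y_def
      by (simp add: power_int_add power2_eq_square mult_ac)
    thus ?thesis using powi_inj[OF q nr] by blast
  qed
  ultimately show ?thesis by blast
qed


lemma neg_swap: "(- inverse q) *s X - (- q) *s Z = q *s Z - inverse q *s (X::'k::field^'n)"
  by (simp add: vector_smult_lneg algebra_simps)

lemma inj_powi:
  fixes q b :: "'k::field"
  assumes q: "q \<noteq> 0" and nr: "not_root_of_unity q" and b: "b \<noteq> 0"
    and f: "\<And>i j. i \<in> S \<Longrightarrow> j \<in> S \<Longrightarrow> f i = f j \<Longrightarrow> i = j"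
    and g: "\<And>j. j \<in> S \<Longrightarrow> g j = b * q powi f j"
  shows "inj_on g S"
proof (rule inj_onI)
  fix i j assume i: "i \<in> S" and j: "j \<in> S" and eq: "g i = g j"
  hence "b * q powi f i = b * q powi f j" using g by simp
  hence "q powi f i = q powi f j" using b by simp
  hence "f i = f j" by (rule powi_inj[OF q nr])
  thus "i = j" using f i j by blast
qed


theorem lemma15p1:
  fixes q a as :: "'k::alg_closed_field"
    and Yp Ym K Ki :: "nat \<Rightarrow> 'k^'n^'n"
    and A As :: "'k^'n^'n"
  assumes "q \<noteq> 0" and "not_root_of_unity q"
    and "a \<noteq> 0" and "as \<noteq> 0"
    and "(A = mat a ** Ym 1 \<and> As = mat as ** Ym 0) \<or> (A = mat a ** Yp 0 \<and> As = mat as ** Yp 1)"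
    and "U_module q Yp Ym K Ki"
    and "U_irreducible Yp Ym K Ki"
    and "has_type q K 1 1"
    and "\<forall>W. vec.subspace W \<and> invariant A W \<and> invariant As W \<longrightarrow> W = {0} \<or> W = UNIV"
  shows "tridiagonal_pair A As \<and>
         standard_ordering A As (diameter A) (\<lambda>i. a * q powi (2 * int i - int (diameter A))) \<and>
         standard_ordering As A (diameter A) (\<lambda>i. as * q powi (int (diameter A) - 2 * int i))"
proof -
  note q = assms(1) and nr = assms(2) and a = assms(3) and as = assms(4)
  have d: "q - inverse q \<noteq> 0"
  proof
    assume "q - inverse q = 0"
    hence "q * q = q * inverse q" by simp
    hence "q ^ 2 = 1" using q by (simp add: power2_eq_square)
    thus False using nr unfolding not_root_of_unity_def by (metis zero_less_numeral)
  qed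
  have EX: "\<exists>(e::nat) (U :: nat \<Rightarrow> ('k^'n) set).
        ((\<forall>i\<le>e. vec.subspace (U i) \<and> U i \<noteq> {0}) \<and>
        (\<forall>v. \<exists>u. (\<forall>i\<le>e. u i \<in> U i) \<and> v = (\<Sum>i\<le>e. u i)) \<and>
        (\<forall>u. (\<forall>i\<le>e. u i \<in> U i) \<and> (\<Sum>i\<le>e. u i) = 0 \<longrightarrow> (\<forall>i\<le>e. u i = 0)) \<and>
        (\<forall>i\<le>e. \<forall>v\<in>U i. K 0 *v v = (1 * q powi (2 * int i - int e)) *s v \<and>
                         K 1 *v v = (1 * q powi (int e - 2 * int i)) *s v))"
    using assms(8) unfolding has_type_def by (rule conjunct2[OF conjunct2])
  then obtain e U where H: "(\<forall>i\<le>e. vec.subspace (U i) \<and> U i \<noteq> {0}) \<and>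
        (\<forall>v. \<exists>u. (\<forall>i\<le>e. u i \<in> U i) \<and> v = (\<Sum>i\<le>e. u i)) \<and>
        (\<forall>u. (\<forall>i\<le>e. u i \<in> U i) \<and> (\<Sum>i\<le>e. u i) = 0 \<longrightarrow> (\<forall>i\<le>e. u i = 0)) \<and>
        (\<forall>i\<le>e. \<forall>v\<in>U i. K 0 *v v = (1 * q powi (2 * int i - int e)) *s v \<and>
                         K 1 *v v = (1 * q powi (int e - 2 * int i)) *s v)"
    by (elim exE) (erule that)
  have ds: "dsumU e U" unfolding dsumU_def using H by (elim conjE) blast
  have nz: "\<forall>i\<le>e. U i \<noteq> {0}" using H by (elim conjE) blast
  have K0: "\<forall>j\<le>e. \<forall>v\<in>U j. K 0 *v v = q powi (2 * int j - int e) *s v"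
    using H by (elim conjE) simp
  have K1: "\<forall>j\<le>e. \<forall>v\<in>U j. K 1 *v v = q powi (int e - 2 * int j) *s v"
    using H by (elim conjE) simp
  have l0: "\<forall>j\<le>e. q powi (2 * int j - int e) \<noteq> 0" using q by simp
  have l1: "\<forall>j\<le>e. q powi (int e - 2 * int j) \<noteq> 0" using q by simp
  have UM1: "qcomm q (K 0) (Ym 0) = mat 1" "qcomm q (K 1) (Ym 1) = mat 1"
    "qcomm q (Yp 0) (K 0) = mat 1" "qcomm q (Yp 1) (K 1) = mat 1"
    using assms(6) unfolding U_module_def by simp_all
  have UM2: "serre q (Ym 1) (Ym 0) = 0" "serre q (Ym 0) (Ym 1) = 0"
    "serre q (Yp 0) (Yp 1) = 0" "serre q (Yp 1) (Yp 0) = 0"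
    using assms(6) unfolding U_module_def by simp_all
  define \<theta>A where "\<theta>A i = a * q powi (2 * int i - int e)" for i
  define \<theta>S where "\<theta>S i = as * q powi (int e - 2 * int i)" for i
  have injA: "inj_on \<theta>A {..e}"
    by (rule inj_powi[OF q nr a, where f="\<lambda>i. 2 * int i - int e"]) (auto simp: \<theta>A_def)
  have injS: "inj_on \<theta>S {..e}"
    by (rule inj_powi[OF q nr as, where f="\<lambda>i. int e - 2 * int i"]) (auto simp: \<theta>S_def)
  have rel1: "\<forall>v. q *s (K 1 *v (Ym 1 *v v)) - inverse q *s (Ym 1 *v (K 1 *v v)) = (q - inverse q) *s v"
    using qcomm_one[OF d UM1(2)] by blast
  have rel0: "\<forall>v. q *s (K 0 *v (Ym 0 *v v)) - inverse q *s (Ym 0 *v (K 0 *v v)) = (q - inverse q) *s v"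
    using qcomm_one[OF d UM1(1)] by blast
  have relp0: "\<forall>v. (- inverse q) *s (K 0 *v (Yp 0 *v v)) - (- q) *s (Yp 0 *v (K 0 *v v)) = (q - inverse q) *s v"
    using qcomm_one[OF d UM1(3)] by (simp add: neg_swap)
  have relp1: "\<forall>v. (- inverse q) *s (K 1 *v (Yp 1 *v v)) - (- q) *s (Yp 1 *v (K 1 *v v)) = (q - inverse q) *s v"
    using qcomm_one[OF d UM1(4)] by (simp add: neg_swap)
  have ab1: "q - inverse q = q - inverse q" by simp
  have ab2: "- inverse q - - q = q - inverse q" by simp
  have goods: "(vec.span (\<Union>\<mu>\<in>\<theta>A ` {..e}. eigenspace A \<mu>) = UNIV \<and> {\<mu>. is_eigenvalue A \<mu>} = \<theta>A ` {..e})
      \<and> (vec.span (\<Union>\<mu>\<in>\<theta>S ` {..e}. eigenspace As \<mu>) = UNIV \<and> {\<mu>. is_eigenvalue As \<mu>} = \<theta>S ` {..e})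
      \<and> (\<forall>v. A *v (A *v (A *v (As *v v))) - qint3 q *s (A *v (A *v (As *v (A *v v))))
               + qint3 q *s (A *v (As *v (A *v (A *v v)))) - As *v (A *v (A *v (A *v v))) = 0)
      \<and> (\<forall>v. As *v (As *v (As *v (A *v v))) - qint3 q *s (As *v (As *v (A *v (As *v v))))
               + qint3 q *s (As *v (A *v (As *v (As *v v)))) - A *v (As *v (As *v (As *v v))) = 0)"
    using assms(5)
  proof
    assume c1: "A = mat a ** Ym 1 \<and> As = mat as ** Ym 0"
    have fA: "(\<lambda>j. a * inverse (q powi (int e - 2 * int j))) = \<theta>A"
      by (rule ext) (simp add: \<theta>A_def inv_powi)
    have fS: "(\<lambda>j. as * inverse (q powi (2 * int j - int e))) = \<theta>S"
      by (rule ext) (simp add: \<theta>S_def inv_powi)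
    have gA: "vec.span (\<Union>\<mu>\<in>(\<lambda>j. a * inverse (q powi (int e - 2 * int j))) ` {..e}. eigenspace (mat a ** Ym 1) \<mu>) = UNIV
     \<and> {\<mu>. is_eigenvalue (mat a ** Ym 1) \<mu>} = (\<lambda>j. a * inverse (q powi (int e - 2 * int j))) ` {..e}"
    proof (rule raise_case[OF ds nz K1 l1 rel1 ab1 d])
      show "\<forall>j\<le>e. \<forall>m\<le>e. m \<noteq> j \<longrightarrow> q * q powi (int e - 2 * int m) = inverse q * q powi (int e - 2 * int j) \<longrightarrow> m = Suc j"
      proof (intro allI impI)
        fix j m assume "q * q powi (int e - 2 * int m) = inverse q * q powi (int e - 2 * int j)"
        hence "int e - 2 * int m + 2 = int e - 2 * int j" by (rule qrel[OF q nr])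
        thus "m = Suc j" by linarith
      qed
      show "inj_on (\<lambda>j. a * inverse (q powi (int e - 2 * int j))) {..e}" using injA fA by simp
    qed
    have gS: "vec.span (\<Union>\<mu>\<in>(\<lambda>j. as * inverse (q powi (2 * int j - int e))) ` {..e}. eigenspace (mat as ** Ym 0) \<mu>) = UNIV
     \<and> {\<mu>. is_eigenvalue (mat as ** Ym 0) \<mu>} = (\<lambda>j. as * inverse (q powi (2 * int j - int e))) ` {..e}"
    proof (rule lower_case[OF ds nz K0 l0 rel0 ab1 d])
      show "\<forall>j\<le>e. \<forall>m\<le>e. m \<noteq> j \<longrightarrow> q * q powi (2 * int m - int e) = inverse q * q powi (2 * int j - int e) \<longrightarrow> Suc m = j"
      proof (intro allI impI)
        fix j m assume "q * q powi (2 * int m - int e) = inverse q * q powi (2 * int j - int e)"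
        hence "2 * int m - int e + 2 = 2 * int j - int e" by (rule qrel[OF q nr])
        thus "Suc m = j" by linarith
      qed
      show "inj_on (\<lambda>j. as * inverse (q powi (2 * int (e - j) - int e))) {..e}"
        by (rule inj_powi[OF q nr as, where f="\<lambda>j. - (2 * int (e - j) - int e)"]) (auto simp: inv_powi)
    qed
    show ?thesis
      using gA gS c1 serre_scaled[OF UM2(1), of a as] serre_scaled[OF UM2(2), of as a]
      unfolding fA fS by simp
  next
    assume c2: "A = mat a ** Yp 0 \<and> As = mat as ** Yp 1"
    have fA: "(\<lambda>j. a * inverse (q powi (2 * int j - int e))) ` {..e} = \<theta>A ` {..e}"
    proof -
      have "(\<lambda>j. a * inverse (q powi (2 * int j - int e))) ` {..e} = (\<lambda>j. \<theta>A (e - j)) ` {..e}"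
        by (rule image_cong[OF refl]) (simp add: \<theta>A_def inv_powi of_nat_diff)
      thus ?thesis using image_rev[of \<theta>A e] by simp
    qed
    have fS: "(\<lambda>j. as * inverse (q powi (int e - 2 * int j))) ` {..e} = \<theta>S ` {..e}"
    proof -
      have "(\<lambda>j. as * inverse (q powi (int e - 2 * int j))) ` {..e} = (\<lambda>j. \<theta>S (e - j)) ` {..e}"
        by (rule image_cong[OF refl]) (simp add: \<theta>S_def inv_powi of_nat_diff)
      thus ?thesis using image_rev[of \<theta>S e] by simp
    qed
    have gA: "vec.span (\<Union>\<mu>\<in>(\<lambda>j. a * inverse (q powi (2 * int j - int e))) ` {..e}. eigenspace (mat a ** Yp 0) \<mu>) = UNIV
     \<and> {\<mu>. is_eigenvalue (mat a ** Yp 0) \<mu>} = (\<lambda>j. a * inverse (q powi (2 * int j - int e))) ` {..e}"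
    proof (rule raise_case[OF ds nz K0 l0 relp0 ab2 d])
      show "\<forall>j\<le>e. \<forall>m\<le>e. m \<noteq> j \<longrightarrow> - inverse q * q powi (2 * int m - int e) = - q * q powi (2 * int j - int e) \<longrightarrow> m = Suc j"
      proof (intro allI impI)
        fix j m assume "- inverse q * q powi (2 * int m - int e) = - q * q powi (2 * int j - int e)"
        hence "q * q powi (2 * int j - int e) = inverse q * q powi (2 * int m - int e)" by simp
        hence "2 * int j - int e + 2 = 2 * int m - int e" by (rule qrel[OF q nr])
        thus "m = Suc j" by linarith
      qed
      show "inj_on (\<lambda>j. a * inverse (q powi (2 * int j - int e))) {..e}"
        by (rule inj_powi[OF q nr a, where f="\<lambda>j. - (2 * int j - int e)"]) (auto simp: inv_powi)
    qed
    have gS: "vec.span (\<Union>\<mu>\<in>(\<lambda>j. as * inverse (q powi (int e - 2 * int j))) ` {..e}. eigenspace (mat as ** Yp 1) \<mu>) = UNIV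
     \<and> {\<mu>. is_eigenvalue (mat as ** Yp 1) \<mu>} = (\<lambda>j. as * inverse (q powi (int e - 2 * int j))) ` {..e}"
    proof (rule lower_case[OF ds nz K1 l1 relp1 ab2 d])
      show "\<forall>j\<le>e. \<forall>m\<le>e. m \<noteq> j \<longrightarrow> - inverse q * q powi (int e - 2 * int m) = - q * q powi (int e - 2 * int j) \<longrightarrow> Suc m = j"
      proof (intro allI impI)
        fix j m assume "- inverse q * q powi (int e - 2 * int m) = - q * q powi (int e - 2 * int j)"
        hence "q * q powi (int e - 2 * int j) = inverse q * q powi (int e - 2 * int m)" by simp
        hence "int e - 2 * int j + 2 = int e - 2 * int m" by (rule qrel[OF q nr])
        thus "Suc m = j" by linarith
      qed
      show "inj_on (\<lambda>j. as * inverse (q powi (int e - 2 * int (e - j)))) {..e}"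
        by (rule inj_powi[OF q nr as, where f="\<lambda>j. - (int e - 2 * int (e - j))"]) (auto simp: inv_powi)
    qed
    show ?thesis
      using gA gS c2 serre_scaled[OF UM2(3), of a as] serre_scaled[OF UM2(4), of as a]
      unfolding fA fS by simp
  qed
  have gA1: "vec.span (\<Union>\<mu>\<in>\<theta>A ` {..e}. eigenspace A \<mu>) = UNIV" and gA2: "{\<mu>. is_eigenvalue A \<mu>} = \<theta>A ` {..e}"
    and gS1: "vec.span (\<Union>\<mu>\<in>\<theta>S ` {..e}. eigenspace As \<mu>) = UNIV" and gS2: "{\<mu>. is_eigenvalue As \<mu>} = \<theta>S ` {..e}"
    and SA: "\<forall>v. A *v (A *v (A *v (As *v v))) - qint3 q *s (A *v (A *v (As *v (A *v v))))
               + qint3 q *s (A *v (As *v (A *v (A *v v)))) - As *v (A *v (A *v (A *v v))) = 0"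
    and SS: "\<forall>v. As *v (As *v (As *v (A *v v))) - qint3 q *s (As *v (As *v (A *v (As *v v))))
               + qint3 q *s (As *v (A *v (As *v (As *v v)))) - A *v (As *v (As *v (As *v v))) = 0"
    using goods by blast+
  have dA: "diameter A = e"
    unfolding diameter_def gA2 card_image[OF injA] by simp
  have spanA: "vec.span (\<Union>k\<le>e. eigenspace A (\<theta>A k)) = UNIV" using gA1 by (simp add: image_image)
  have spanS: "vec.span (\<Union>k\<le>e. eigenspace As (\<theta>S k)) = UNIV" using gS1 by (simp add: image_image)
  have PA: "\<forall>i\<le>e. \<forall>k\<le>e. \<theta>A k ^ 3 - qint3 q * \<theta>A k ^ 2 * \<theta>A i + qint3 q * \<theta>A k * \<theta>A i ^ 2 - \<theta>A i ^ 3 = 0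
              \<longrightarrow> k = i \<or> k = Suc i \<or> Suc k = i"
  proof (intro allI impI)
    fix i k assume "\<theta>A k ^ 3 - qint3 q * \<theta>A k ^ 2 * \<theta>A i + qint3 q * \<theta>A k * \<theta>A i ^ 2 - \<theta>A i ^ 3 = 0"
    hence "2 * int k - int e = 2 * int i - int e \<or> 2 * int k - int e = 2 * int i - int e + 2
        \<or> 2 * int k - int e + 2 = 2 * int i - int e"
      unfolding \<theta>A_def by (rule pcond[OF q nr d a])
    thus "k = i \<or> k = Suc i \<or> Suc k = i" by linarith
  qed
  have PS: "\<forall>i\<le>e. \<forall>k\<le>e. \<theta>S k ^ 3 - qint3 q * \<theta>S k ^ 2 * \<theta>S i + qint3 q * \<theta>S k * \<theta>S i ^ 2 - \<theta>S i ^ 3 = 0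
              \<longrightarrow> k = i \<or> k = Suc i \<or> Suc k = i"
  proof (intro allI impI)
    fix i k assume "\<theta>S k ^ 3 - qint3 q * \<theta>S k ^ 2 * \<theta>S i + qint3 q * \<theta>S k * \<theta>S i ^ 2 - \<theta>S i ^ 3 = 0"
    hence "int e - 2 * int k = int e - 2 * int i \<or> int e - 2 * int k = int e - 2 * int i + 2
        \<or> int e - 2 * int k + 2 = int e - 2 * int i"
      unfolding \<theta>S_def by (rule pcond[OF q nr d as])
    thus "k = i \<or> k = Suc i \<or> Suc k = i" by linarith
  qed
  have stdA: "standard_ordering A As e \<theta>A" by (rule serre_std[OF spanA gA2 injA SA PA])
  have stdS: "standard_ordering As A e \<theta>S" by (rule serre_std[OF spanS gS2 injS SS PS])
  have diagA: "diagonalizable A" unfolding diagonalizable_def gA2 by (rule gA1)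
  have diagS: "diagonalizable As" unfolding diagonalizable_def gS2 by (rule gS1)
  have tdp: "tridiagonal_pair A As"
    unfolding tridiagonal_pair_def using diagA diagS stdA stdS assms(9) by blast
  have eA: "(\<lambda>i. a * q powi (2 * int i - int e)) = \<theta>A" by (rule ext) (simp add: \<theta>A_def)
  have eS: "(\<lambda>i. as * q powi (int e - 2 * int i)) = \<theta>S" by (rule ext) (simp add: \<theta>S_def)
  show ?thesis unfolding dA unfolding eA eS using tdp stdA stdS by blast

qed

end
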